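(* Let $\xi\in\Xi^*_{T1}\cup\Xi^*_{T2}$. Then $\xi$ is a product correlation plan, i.e. $\xi[\sigma_{T1},\sigma_{T2}]=\xi[\sigma_{T1},\varnothing]\cdot\xi[\varnothing,\sigma_{T2}]$ for all $(\sigma_{T1},\sigma_{T2})\in\Sigma_{T1}\bowtie\Sigma_{T2}$.
   Context: A finite extensive-form game is played on a tree; each internal node belongs to one of the players $T1,T2,O$ or to chance. The nodes of player $i$ are partitioned into information sets $\mathcal I_i$; all nodes of $I\in\mathcal I_i$ share the action set $A_I$. Perfect recall is assumed. The sequences of player $i$ are $\Sigma_i=\{(I,a):I\in\mathcal I_i,a\in A_I\}\cup\{\varnothing\}$. For an information set $I$ of player $i$, $\sigma(I)$ denotes the last pair $(I',a')$ of player $i$ on the root-to-$I$ path, or $\varnothing$ if $i$ does not act before $I$. Two information sets $I_i\in\mathcal I_i$, $I_j\in\mathcal I_j$ are connected ($I_i\rightleftharpoons I_j$) if there exist $v\in I_i$, $w\in I_j$ such that the root-to-$v$ path passes through $w$ or vice versa. A pair $(\sigma_i,\sigma_j)$ is relevant ($\sigma_i\bowtie\sigma_j$) if one of them is $\varnothing$ or $\sigma_i=(I_i,a_i)$, $\sigma_j=(I_j,a_j)$ with $I_i\rightleftharpoons I_j$; $\Sigma_{T1}\bowtie\Sigma_{T2}$ is the set of relevant pairs. Similarly $\sigma_i\bowtie I_j$ if $\sigma_i=\varnothing$ or $\sigma_i=(I_i,a_i)$ with $I_i\rightleftharpoons I_j$. The von Stengel–Forges polytope $\mathcal V_T$ is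 the set of nonnegative vectors $\xi$ indexed by relevant pairs with: $\xi[\varnothing,\varnothing]=1$; $\sum_{a\in A_{I}}\xi[(I,a),\sigma_{T2}]=\xi[\sigma(I),\sigma_{T2}]$ for all $I\in\mathcal I_{T1}$, $\sigma_{T2}\in\Sigma_{T2}$ with $I\bowtie\sigma_{T2}$; $\sum_{b\in A_{J}}\xi[\sigma_{T1},(J,b)]=\xi[\sigma_{T1},\sigma(J)]$ for all $J\in\mathcal I_{T2}$, $\sigma_{T1}\in\Sigma_{T1}$ with $\sigma_{T1}\bowtie J$. The semi-randomized correlation plans are $\Xi^*_{T1}=\{\xi\in\mathcal V_T:\xi[\varnothing,\sigma_{T2}]\in\{0,1\}\ \forall\sigma_{T2}\in\Sigma_{T2}\}$ and $\Xi^*_{T2}=\{\xi\in\mathcal V_T:\xi[\sigma_{T1},\varnothing]\in\{0,1\}\ \forall\sigma_{T1}\in\Sigma_{T1}\}$. *)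

theory Defs
  imports Complex_Main "HOL-Library.Sublist"
begin

text \<open>Game trees: a node is the list of actions from the root (its history). Every internal node h
  carries an information-set label lab h; the owner of a label is a player
  (T1, T2, O) or chance. A I is the action set of information set I.\<close>

datatype player = T1 | T2 | O | Chance

definition internal :: "'a list set \<Rightarrow> 'a list \<Rightarrow> bool" where
  "internal H h \<longleftrightarrow> h \<in> H \<and> (\<exists>a. h @ [a] \<in> H)"

definition own_seq :: "('a list \<Rightarrow> 'i) \<Rightarrow> ('i \<Rightarrow> player) \<Rightarrow> player \<Rightarrow> 'a list \<Rightarrow> ('i \<times> 'a) list" where
  "own_seq lab owner i h =
     [(lab (take k h), h ! k). k \<leftarrow> [0..<length h], owner (lab (take k h)) = i]"

definition efg :: "'a list set \<Rightarrow> ('a list \<Rightarrow> 'i) \<Rightarrow> ('i \<Rightarrow> player) \<Rightarrow> ('i \<Rightarrow> 'a set) \<Rightarrow> bool" where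
  "efg H lab owner A \<longleftrightarrow>
     finite H \<and> [] \<in> H \<and>
     (\<forall>h a. h @ [a] \<in> H \<longrightarrow> h \<in> H) \<and>
     (\<forall>h. internal H h \<and> owner (lab h) \<noteq> Chance \<longrightarrow> A (lab h) = {a. h @ [a] \<in> H}) \<and>
     (\<forall>h h'. internal H h \<and> internal H h' \<and> lab h = lab h' \<and> owner (lab h) \<noteq> Chance \<longrightarrow>
        own_seq lab owner (owner (lab h)) h = own_seq lab owner (owner (lab h)) h')"

definition infosets :: "'a list set \<Rightarrow> ('a list \<Rightarrow> 'i) \<Rightarrow> ('i \<Rightarrow> player) \<Rightarrow> player \<Rightarrow> 'i set" where
  "infosets H lab owner i = {I. \<exists>h. internal H h \<and> lab h = I \<and> owner I = i}"

text \<open>Sequences: None is the empty sequence.\<close>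
definition seqs :: "'a list set \<Rightarrow> ('a list \<Rightarrow> 'i) \<Rightarrow> ('i \<Rightarrow> player) \<Rightarrow> ('i \<Rightarrow> 'a set) \<Rightarrow> player
    \<Rightarrow> ('i \<times> 'a) option set" where
  "seqs H lab owner A i = {None} \<union> {Some (I, a) | I a. I \<in> infosets H lab owner i \<and> a \<in> A I}"

text \<open>sigma(I): last own (infoset, action) pair before I (well defined by perfect recall).\<close>
definition parent_seq :: "'a list set \<Rightarrow> ('a list \<Rightarrow> 'i) \<Rightarrow> ('i \<Rightarrow> player) \<Rightarrow> 'i \<Rightarrow> ('i \<times> 'a) option" where
  "parent_seq H lab owner I =
     (let h = (SOME h. internal H h \<and> lab h = I); s = own_seq lab owner (owner I) h
      in if s = [] then None else Some (last s))"

definition connected :: "'a list set \<Rightarrow> ('a list \<Rightarrow> 'i) \<Rightarrow> 'i \<Rightarrow> 'i \<Rightarrow> bool" where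
  "connected H lab I J \<longleftrightarrow>
     (\<exists>v w. internal H v \<and> internal H w \<and> lab v = I \<and> lab w = J \<and> (prefix w v \<or> prefix v w))"

definition relevant :: "'a list set \<Rightarrow> ('a list \<Rightarrow> 'i) \<Rightarrow> ('i \<times> 'a) option \<Rightarrow> ('i \<times> 'a) option \<Rightarrow> bool" where
  "relevant H lab s1 s2 \<longleftrightarrow>
     s1 = None \<or> s2 = None \<or> (\<exists>I a J b. s1 = Some (I, a) \<and> s2 = Some (J, b) \<and> connected H lab I J)"

definition relevant_si :: "'a list set \<Rightarrow> ('a list \<Rightarrow> 'i) \<Rightarrow> ('i \<times> 'a) option \<Rightarrow> 'i \<Rightarrow> bool" where
  "relevant_si H lab s J \<longleftrightarrow> s = None \<or> (\<exists>I a. s = Some (I, a) \<and> connected H lab I J)"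

definition relevant_pairs :: "'a list set \<Rightarrow> ('a list \<Rightarrow> 'i) \<Rightarrow> ('i \<Rightarrow> player) \<Rightarrow> ('i \<Rightarrow> 'a set)
    \<Rightarrow> (('i \<times> 'a) option \<times> ('i \<times> 'a) option) set" where
  "relevant_pairs H lab owner A =
     {(s1, s2). s1 \<in> seqs H lab owner A T1 \<and> s2 \<in> seqs H lab owner A T2 \<and> relevant H lab s1 s2}"

text \<open>The von Stengel--Forges polytope. A vector indexed by relevant pairs is represented
  by a function on all pairs of sequences; only its values on relevant pairs matter.\<close>
definition vsf_polytope :: "'a list set \<Rightarrow> ('a list \<Rightarrow> 'i) \<Rightarrow> ('i \<Rightarrow> player) \<Rightarrow> ('i \<Rightarrow> 'a set)
    \<Rightarrow> (('i \<times> 'a) option \<Rightarrow> ('i \<times> 'a) option \<Rightarrow> real) set" where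
  "vsf_polytope H lab owner A = {\<xi>.
     (\<forall>(s1, s2) \<in> relevant_pairs H lab owner A. \<xi> s1 s2 \<ge> 0) \<and>
     \<xi> None None = 1 \<and>
     (\<forall>I \<in> infosets H lab owner T1. \<forall>s2 \<in> seqs H lab owner A T2. relevant_si H lab s2 I \<longrightarrow>
        (\<Sum>a\<in>A I. \<xi> (Some (I, a)) s2) = \<xi> (parent_seq H lab owner I) s2) \<and>
     (\<forall>J \<in> infosets H lab owner T2. \<forall>s1 \<in> seqs H lab owner A T1. relevant_si H lab s1 J \<longrightarrow>
        (\<Sum>b\<in>A J. \<xi> s1 (Some (J, b))) = \<xi> s1 (parent_seq H lab owner J))}"

definition semi_T1 where
  "semi_T1 H lab owner A = {\<xi> \<in> vsf_polytope H lab owner A.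
     \<forall>s2 \<in> seqs H lab owner A T2. \<xi> None s2 \<in> {0, 1}}"

definition semi_T2 where
  "semi_T2 H lab owner A = {\<xi> \<in> vsf_polytope H lab owner A.
     \<forall>s1 \<in> seqs H lab owner A T1. \<xi> s1 None \<in> {0, 1}}"

end

theory Submission
  imports Defs
begin

lemma concat_if_map: "concat (map (\<lambda>k. if P k then [f k] else []) xs) = map f (filter P xs)"
  by (induction xs) auto

lemma own_seq_alt: "own_seq lab owner i h =
  map (\<lambda>k. (lab (take k h), h ! k)) (filter (\<lambda>k. owner (lab (take k h)) = i) [0..<length h])"
  unfolding own_seq_def by (simp add: concat_if_map)

lemma own_seq_take:
  assumes "k \<le> length h"
  shows "own_seq lab owner i (take k h) =
    map (\<lambda>j. (lab (take j h), h ! j)) (filter (\<lambda>j. owner (lab (take j h)) = i) [0..<k])"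
proof -
  have "own_seq lab owner i (take k h) =
    map (\<lambda>j. (lab (take j (take k h)), take k h ! j)) (filter (\<lambda>j. owner (lab (take j (take k h))) = i) [0..<k])"
    using assms by (simp add: own_seq_alt min_def)
  also have "filter (\<lambda>j. owner (lab (take j (take k h))) = i) [0..<k] = filter (\<lambda>j. owner (lab (take j h)) = i) [0..<k]"
    by (rule filter_cong) (auto simp: min_def)
  also have "map (\<lambda>j. (lab (take j (take k h)), take k h ! j)) (filter (\<lambda>j. owner (lab (take j h)) = i) [0..<k])
      = map (\<lambda>j. (lab (take j h), h ! j)) (filter (\<lambda>j. owner (lab (take j h)) = i) [0..<k])"
    by (rule map_cong) (auto simp: min_def)
  finally show ?thesis .
qed

lemma own_seq_mem:
  assumes "x \<in> set (own_seq lab owner i h)"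
  shows "\<exists>k<length h. x = (lab (take k h), h ! k) \<and> owner (lab (take k h)) = i \<and>
     length (own_seq lab owner i (take k h)) < length (own_seq lab owner i h)"
proof -
  let ?P = "\<lambda>j. owner (lab (take j h)) = i"
  from assms obtain k where k: "k < length h" "?P k" "x = (lab (take k h), h ! k)"
    by (auto simp: own_seq_alt)
  have "length (own_seq lab owner i (take k h)) = length (filter ?P [0..<k])"
    using k by (simp add: own_seq_take)
  also have "\<dots> < length (filter ?P [0..<Suc k])" using k by simp
  also have "\<dots> \<le> length (filter ?P [0..<length h])"
  proof -
    have "[0..<length h] = [0..<Suc k] @ [Suc k..<length h]"
    proof -
      have e: "Suc k + (length h - Suc k) = length h" using k by simp
      show ?thesis using upt_add_eq_append[OF le0, of "Suc k" "length h - Suc k"] by (simp only: e)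
    qed
    then have "length (filter ?P [0..<length h]) = length (filter ?P [0..<Suc k]) + length (filter ?P [Suc k..<length h])"
      by (metis filter_append length_append)
    then show ?thesis by linarith
  qed
  finally have lt: "length (own_seq lab owner i (take k h)) < length (filter ?P [0..<length h])" .
  have len: "length (own_seq lab owner i h) = length (filter ?P [0..<length h])" by (simp add: own_seq_alt)
  show ?thesis using k lt len by auto
qed

lemma efg_fin: "efg H lab owner A \<Longrightarrow> finite H"
  unfolding efg_def by blast

lemma efg_pc: "efg H lab owner A \<Longrightarrow> h @ [a] \<in> H \<Longrightarrow> h \<in> H"
  unfolding efg_def by blast

lemma efg_A: "efg H lab owner A \<Longrightarrow> internal H h \<Longrightarrow> owner (lab h) \<noteq> Chance \<Longrightarrow> A (lab h) = {a. h @ [a] \<in> H}"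
  unfolding efg_def by blast

lemma efg_PR: "efg H lab owner A \<Longrightarrow> internal H h \<Longrightarrow> internal H h' \<Longrightarrow> lab h = lab h' \<Longrightarrow> owner (lab h) \<noteq> Chance
   \<Longrightarrow> own_seq lab owner (owner (lab h)) h = own_seq lab owner (owner (lab h)) h'"
  unfolding efg_def by blast

lemma take_in:
  assumes "efg H lab owner A" "h \<in> H" shows "take n h \<in> H"
  using assms(2)
proof (induction h arbitrary: n rule: rev_induct)
  case Nil then show ?case by simp
next
  case (snoc x xs)
  have "xs \<in> H" using snoc.prems efg_pc[OF assms(1)] by blast
  then show ?case using snoc by (cases "n \<le> length xs") auto
qed

lemma internal_take:
  assumes "efg H lab owner A" "h \<in> H" "k < length h"
  shows "internal H (take k h)"
proof -
  have "take k h @ [h ! k] = take (Suc k) h" using assms(3) by (simp add: take_Suc_conv_app_nth)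
  then show ?thesis unfolding internal_def using take_in[OF assms(1,2)] by metis
qed

lemma connected_sym: "connected H lab I J \<longleftrightarrow> connected H lab J I"
  unfolding connected_def by blast

lemma relevant_sym: "relevant H lab s t \<longleftrightarrow> relevant H lab t s"
  unfolding relevant_def connected_def by blast

lemma connected_symD: "connected H lab I J \<Longrightarrow> connected H lab J I"
  unfolding connected_def by blast

definition hI :: "'a list set \<Rightarrow> ('a list \<Rightarrow> 'i) \<Rightarrow> 'i \<Rightarrow> 'a list" where
  "hI H lab I = (SOME h. internal H h \<and> lab h = I)"

definition dep :: "'a list set \<Rightarrow> ('a list \<Rightarrow> 'i) \<Rightarrow> ('i \<Rightarrow> player) \<Rightarrow> player \<Rightarrow> ('i \<times> 'a) option \<Rightarrow> nat" where
  "dep H lab owner i s = (case s of None \<Rightarrow> 0 | Some (I, a) \<Rightarrow> Suc (length (own_seq lab owner i (hI H lab I))))"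

lemma hI_props:
  assumes "I \<in> infosets H lab owner i"
  shows "internal H (hI H lab I) \<and> lab (hI H lab I) = I \<and> owner I = i"
proof -
  from assms obtain h where "internal H h" "lab h = I" "owner I = i" unfolding infosets_def by auto
  then have "internal H (hI H lab I) \<and> lab (hI H lab I) = I"
    unfolding hI_def using someI[of "\<lambda>h. internal H h \<and> lab h = I" h] by blast
  then show ?thesis using \<open>owner I = i\<close> by simp
qed

lemma par_facts:
  assumes efg: "efg H lab owner A" and I: "I \<in> infosets H lab owner i" and ch: "i \<noteq> Chance"
  shows "parent_seq H lab owner I \<in> seqs H lab owner A i
    \<and> dep H lab owner i (parent_seq H lab owner I) < dep H lab owner i (Some (I, a))
    \<and> (\<forall>I' a' J. parent_seq H lab owner I = Some (I', a') \<longrightarrow> connected H lab I J \<longrightarrow> connected H lab I' J)"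
proof -
  define h where "h = hI H lab I"
  have hp: "internal H h" "lab h = I" "owner I = i" using hI_props[OF I] h_def by auto
  define s where "s = own_seq lab owner i h"
  have ps: "parent_seq H lab owner I = (if s = [] then None else Some (last s))"
    unfolding parent_seq_def Let_def hI_def[symmetric] h_def[symmetric] hp(3) s_def by (rule refl)
  have PR: "\<And>u v. internal H u \<Longrightarrow> internal H v \<Longrightarrow> lab u = lab v \<Longrightarrow> owner (lab u) = i \<Longrightarrow>
     own_seq lab owner i u = own_seq lab owner i v"
  proof -
    fix u v assume "internal H u" "internal H v" "lab u = lab v" "owner (lab u) = i"
    then show "own_seq lab owner i u = own_seq lab owner i v" using efg_PR[OF efg, of u v] ch by simp
  qed
  have inH: "\<And>u. internal H u \<Longrightarrow> u \<in> H" unfolding internal_def by blast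
  show ?thesis
  proof (cases "s = []")
    case True
    then show ?thesis using ps unfolding dep_def seqs_def by simp
  next
    case False
    obtain I' a' where la: "last s = (I', a')" by (cases "last s") auto
    have mem: "(I', a') \<in> set s" using False la last_in_set by metis
    then obtain k where k: "k < length h" "(I', a') = (lab (take k h), h ! k)"
      "owner (lab (take k h)) = i" "length (own_seq lab owner i (take k h)) < length s"
    proof -
      from own_seq_mem[OF mem[unfolded s_def]] obtain k where
        "k < length h" "(I', a') = (lab (take k h), h ! k)"
        "owner (lab (take k h)) = i" "length (own_seq lab owner i (take k h)) < length (own_seq lab owner i h)"
        by blast
      then show ?thesis using that unfolding s_def by blast
    qed
    have it: "internal H (take k h)" using internal_take[OF efg inH[OF hp(1)] k(1)] .
    have I'inf: "I' \<in> infosets H lab owner i" using it k unfolding infosets_def by auto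
    have "A I' = {b. take k h @ [b] \<in> H}" using efg_A[OF efg it] k ch by auto
    moreover have "take k h @ [a'] \<in> H"
      using take_in[OF efg inH[OF hp(1)], of "Suc k"] k by (simp add: take_Suc_conv_app_nth)
    ultimately have a'A: "a' \<in> A I'" by simp
    have seq: "parent_seq H lab owner I \<in> seqs H lab owner A i"
      using ps False la I'inf a'A unfolding seqs_def by auto
    have hp': "internal H (hI H lab I') \<and> lab (hI H lab I') = I' \<and> owner I' = i" using hI_props[OF I'inf] .
    have "own_seq lab owner i (hI H lab I') = own_seq lab owner i (take k h)"
    proof (rule PR)
      show "internal H (hI H lab I')" using hp' by simp
      show "internal H (take k h)" by (rule it)
      show "lab (hI H lab I') = lab (take k h)" using hp' k(2) by simp
      show "owner (lab (hI H lab I')) = i" using hp' by simp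
    qed
    then have lq: "length (own_seq lab owner i (hI H lab I')) < length s" using k(4) by simp
    have pI: "parent_seq H lab owner I = Some (I', a')" using ps False la by simp
    have d1: "dep H lab owner i (parent_seq H lab owner I) = Suc (length (own_seq lab owner i (hI H lab I')))"
      unfolding pI dep_def by simp
    have d2: "dep H lab owner i (Some (I, a)) = Suc (length s)"
      unfolding dep_def s_def h_def by simp
    have dd: "dep H lab owner i (parent_seq H lab owner I) < dep H lab owner i (Some (I, a))"
      unfolding d1 d2 using lq by simp
    have cc: "connected H lab I' J" if "connected H lab I J" for J
    proof -
      from that obtain v w where vw: "internal H v" "internal H w" "lab v = I" "lab w = J"
        "prefix w v \<or> prefix v w" unfolding connected_def by blast
      have "own_seq lab owner i v = s" unfolding s_def using PR[OF vw(1) hp(1)] vw(3) hp(2,3) by simp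
      then have mem': "(I', a') \<in> set (own_seq lab owner i v)" using mem by simp
      obtain k' where k': "k' < length v" "(I', a') = (lab (take k' v), v ! k')"
        using own_seq_mem[OF mem'] by blast
      have it': "internal H (take k' v)" using internal_take[OF efg inH[OF vw(1)] k'(1)] .
      have "prefix (take k' v) v" by (simp add: take_is_prefix)
      then have "prefix (take k' v) w \<or> prefix w (take k' v)"
      proof (cases "prefix w v")
        case True
        then show ?thesis using prefix_same_cases[OF \<open>prefix (take k' v) v\<close> True] by blast
      next
        case False
        then have "prefix v w" using vw(5) by blast
        then show ?thesis using prefix_order.trans[OF \<open>prefix (take k' v) v\<close>] by blast
      qed
      moreover have "lab (take k' v) = I'" using k'(2) by simp
      ultimately show ?thesis unfolding connected_def using it' vw(2,4) by blast
    qed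
    show ?thesis
    proof (intro conjI seq dd allI impI)
      fix I'' a'' J assume "parent_seq H lab owner I = Some (I'', a'')" "connected H lab I J"
      then show "connected H lab I'' J" using cc pI by simp
    qed
  qed
qed

lemma fin_A:
  assumes efg: "efg H lab owner A" and I: "I \<in> infosets H lab owner i" and ch: "i \<noteq> Chance"
  shows "finite (A I)"
proof -
  from I obtain h where h: "internal H h" "lab h = I" "owner I = i" unfolding infosets_def by auto
  then have "A I = {b. h @ [b] \<in> H}" using efg_A[OF efg h(1)] ch by simp
  also have "\<dots> \<subseteq> last ` H"
  proof
    fix b assume "b \<in> {b. h @ [b] \<in> H}"
    then have "h @ [b] \<in> H" by simp
    then show "b \<in> last ` H" by (rule rev_image_eqI) simp
  qed
  finally show ?thesis using efg_fin[OF efg] by (meson finite_surj)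
qed

lemma bound:
  fixes x :: "('i \<times> 'a) option \<Rightarrow> ('i \<times> 'a) option \<Rightarrow> real"
  assumes efg: "efg H lab owner A" and ch: "i \<noteq> Chance"
    and nn: "\<And>s t. s \<in> seqs H lab owner A i \<Longrightarrow> t \<in> seqs H lab owner A j \<Longrightarrow> relevant H lab s t \<Longrightarrow> x s t \<ge> 0"
    and cons: "\<And>I t. I \<in> infosets H lab owner i \<Longrightarrow> t \<in> seqs H lab owner A j \<Longrightarrow> relevant_si H lab t I
       \<Longrightarrow> (\<Sum>a\<in>A I. x (Some (I, a)) t) = x (parent_seq H lab owner I) t"
  shows "s \<in> seqs H lab owner A i \<Longrightarrow> t \<in> seqs H lab owner A j \<Longrightarrow> relevant H lab s t \<Longrightarrow> x s t \<le> x None t"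
proof (induction "dep H lab owner i s" arbitrary: s rule: less_induct)
  case less
  show ?case
  proof (cases s)
    case None then show ?thesis by simp
  next
    case (Some p)
    then obtain I a where s: "s = Some (I, a)" by (cases p) auto
    have I: "I \<in> infosets H lab owner i" and aA: "a \<in> A I" using less.prems(1) s unfolding seqs_def by auto
    have relt: "t = None \<or> (\<exists>J b. t = Some (J, b) \<and> connected H lab I J)"
      using less.prems(3) s unfolding relevant_def by auto
    have rel_si: "relevant_si H lab t I"
      using relt
    proof
      assume "t = None" then show ?thesis unfolding relevant_si_def by simp
    next
      assume "\<exists>J b. t = Some (J, b) \<and> connected H lab I J"
      then obtain J b where "t = Some (J, b)" "connected H lab I J" by blast
      moreover from this(2) have "connected H lab J I" by (rule connected_symD)
      ultimately show ?thesis unfolding relevant_si_def by blast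
    qed
    have fin: "finite (A I)" using fin_A[OF efg I ch] .
    have "x (Some (I, a)) t \<le> (\<Sum>b\<in>A I. x (Some (I, b)) t)"
    proof (rule member_le_sum[OF aA _ fin])
      fix b assume "b \<in> A I - {a}"
      then have "Some (I, b) \<in> seqs H lab owner A i" using I unfolding seqs_def by auto
      moreover have "relevant H lab (Some (I, b)) t" using relt unfolding relevant_def by blast
      ultimately show "0 \<le> x (Some (I, b)) t" using nn[OF _ less.prems(2)] by blast
    qed
    also have "\<dots> = x (parent_seq H lab owner I) t" using cons[OF I less.prems(2) rel_si] .
    also have "\<dots> \<le> x None t"
    proof (rule less.hyps)
      have pf: "parent_seq H lab owner I \<in> seqs H lab owner A i
        \<and> dep H lab owner i (parent_seq H lab owner I) < dep H lab owner i (Some (I, a))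
        \<and> (\<forall>I' a' J. parent_seq H lab owner I = Some (I', a') \<longrightarrow> connected H lab I J \<longrightarrow> connected H lab I' J)"
        using par_facts[OF efg I ch] .
      then show "dep H lab owner i (parent_seq H lab owner I) < dep H lab owner i s" using s by simp
      show "parent_seq H lab owner I \<in> seqs H lab owner A i" using pf by simp
      show "t \<in> seqs H lab owner A j" by (rule less.prems(2))
      show "relevant H lab (parent_seq H lab owner I) t"
      proof (cases "parent_seq H lab owner I")
        case None then show ?thesis unfolding relevant_def by simp
      next
        case (Some q)
        then obtain I' a' where q: "parent_seq H lab owner I = Some (I', a')" by (cases q) auto
        have pf3: "connected H lab I' J" if "connected H lab I J" for J
          using pf q that by blast
        from relt show ?thesis
        proof
          assume "t = None" then show ?thesis unfolding relevant_def by simp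
        next
          assume "\<exists>J b. t = Some (J, b) \<and> connected H lab I J"
          then obtain J b where "t = Some (J, b)" "connected H lab I J" by blast
          then show ?thesis using q pf3 unfolding relevant_def by blast
        qed
      qed
    qed
    finally show ?thesis using s by simp
  qed
qed

lemma mainlem:
  fixes x :: "('i \<times> 'a) option \<Rightarrow> ('i \<times> 'a) option \<Rightarrow> real"
  assumes efg: "efg H lab owner A" and ch: "i \<noteq> Chance" and chj: "j \<noteq> Chance"
    and nn: "\<And>s t. s \<in> seqs H lab owner A i \<Longrightarrow> t \<in> seqs H lab owner A j \<Longrightarrow> relevant H lab s t \<Longrightarrow> x s t \<ge> 0"
    and cons: "\<And>I t. I \<in> infosets H lab owner i \<Longrightarrow> t \<in> seqs H lab owner A j \<Longrightarrow> relevant_si H lab t I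
       \<Longrightarrow> (\<Sum>a\<in>A I. x (Some (I, a)) t) = x (parent_seq H lab owner I) t"
    and consj: "\<And>J s. J \<in> infosets H lab owner j \<Longrightarrow> s \<in> seqs H lab owner A i \<Longrightarrow> relevant_si H lab s J
       \<Longrightarrow> (\<Sum>b\<in>A J. x s (Some (J, b))) = x s (parent_seq H lab owner J)"
    and one: "x None None = 1"
    and bin: "\<And>t. t \<in> seqs H lab owner A j \<Longrightarrow> x None t \<in> {0, 1}"
  shows "s \<in> seqs H lab owner A i \<Longrightarrow> t \<in> seqs H lab owner A j \<Longrightarrow> relevant H lab s t \<Longrightarrow>
    x s t = x s None * x None t"
proof (induction "dep H lab owner j t" arbitrary: t rule: less_induct)
  case less
  show ?case
  proof (cases t)
    case None then show ?thesis using one by simp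
  next
    case (Some p)
    then obtain J b where t: "t = Some (J, b)" by (cases p) auto
    have J: "J \<in> infosets H lab owner j" and bA: "b \<in> A J" using less.prems(2) t unfolding seqs_def by auto
    have fin: "finite (A J)" using fin_A[OF efg J chj] .
    have pf: "parent_seq H lab owner J \<in> seqs H lab owner A j
        \<and> dep H lab owner j (parent_seq H lab owner J) < dep H lab owner j (Some (J, b))
        \<and> (\<forall>I' a' I. parent_seq H lab owner J = Some (I', a') \<longrightarrow> connected H lab J I \<longrightarrow> connected H lab I' I)"
      using par_facts[OF efg J chj] .
    define pt where "pt = parent_seq H lab owner J"
    have ptS: "pt \<in> seqs H lab owner A j" using pf pt_def by simp
    have Nseq: "None \<in> seqs H lab owner A i" unfolding seqs_def by simp
    have sum0: "(\<Sum>b\<in>A J. x None (Some (J, b))) = x None pt"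
      using consj[OF J Nseq] unfolding relevant_si_def pt_def by simp
    have tj: "\<And>b'. b' \<in> A J \<Longrightarrow> Some (J, b') \<in> seqs H lab owner A j" using J unfolding seqs_def by auto
    have nn0: "\<And>b'. b' \<in> A J \<Longrightarrow> x None (Some (J, b')) \<ge> 0"
      using nn[OF Nseq tj] unfolding relevant_def by simp
    show ?thesis
    proof (cases s)
      case None then show ?thesis using one by simp
    next
      case (Some q)
      then obtain I a where s: "s = Some (I, a)" by (cases q) auto
      have conn: "connected H lab I J" using less.prems(3) s t unfolding relevant_def by auto
      have relb: "\<And>b'. relevant H lab s (Some (J, b'))" using conn s unfolding relevant_def by auto
      have nns: "\<And>b'. b' \<in> A J \<Longrightarrow> x s (Some (J, b')) \<ge> 0" using nn[OF less.prems(1) tj relb] .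
      have bds: "x s (Some (J, b')) \<le> x None (Some (J, b'))" if b': "b' \<in> A J" for b'
        using bound[OF efg ch nn cons less.prems(1) tj[OF b'] relb] .
      have sums: "(\<Sum>b\<in>A J. x s (Some (J, b))) = x s pt"
        using consj[OF J less.prems(1)] conn s unfolding relevant_si_def pt_def by auto
      have relpt: "relevant H lab s pt"
      proof (cases pt)
        case None then show ?thesis unfolding relevant_def by simp
      next
        case (Some r)
        then obtain J' b' where r: "pt = Some (J', b')" by (cases r) auto
        have "connected H lab J I" using conn by (rule connected_symD)
        moreover have "parent_seq H lab owner J = Some (J', b')" using r pt_def by simp
        moreover have "\<forall>I' a' I. parent_seq H lab owner J = Some (I', a') \<longrightarrow> connected H lab J I \<longrightarrow> connected H lab I' I"
          using pf by (elim conjE)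
        ultimately have "connected H lab J' I" by blast
        then have "connected H lab I J'" by (rule connected_symD)
        then show ?thesis using s r unfolding relevant_def by blast
      qed
      have IH: "x s pt = x s None * x None pt"
        using less.hyps[of pt] pf pt_def t less.prems(1) ptS relpt by simp
      have "x None t \<in> {0, 1}" using bin less.prems(2) by blast
      then show ?thesis
      proof
        assume z: "x None t = 0"
        have "x s t \<le> 0" using bds[OF bA] z t by simp
        moreover have "x s t \<ge> 0" using nns[OF bA] t by simp
        ultimately show ?thesis using z by simp
      next
        assume "x None t \<in> {1}"
        then have o: "x None t = 1" by simp
        have "x None pt = x None t + (\<Sum>b'\<in>A J - {b}. x None (Some (J, b')))"
          using sum0 sum.remove[OF fin bA, of "\<lambda>b'. x None (Some (J, b'))"] t by simp
        moreover have "x None pt \<le> 1" using bin[OF ptS] by auto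
        moreover have "(\<Sum>b'\<in>A J - {b}. x None (Some (J, b'))) \<ge> 0"
          by (rule sum_nonneg) (rule nn0, blast)
        ultimately have rest0: "(\<Sum>b'\<in>A J - {b}. x None (Some (J, b'))) = 0" and p1: "x None pt = 1"
          using o by linarith+
        have z0: "\<forall>b'\<in>A J - {b}. x None (Some (J, b')) = 0"
          using rest0 sum_nonneg_eq_0_iff[of "A J - {b}" "\<lambda>b'. x None (Some (J, b'))"] fin nn0 by auto
        have zs: "(\<Sum>b'\<in>A J - {b}. x s (Some (J, b'))) = 0"
        proof (rule sum.neutral, rule ballI)
          fix b' assume b': "b' \<in> A J - {b}"
          then show "x s (Some (J, b')) = 0" using bds[of b'] nns[of b'] z0 by force
        qed
        have "x s pt = x s t + (\<Sum>b'\<in>A J - {b}. x s (Some (J, b')))"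
          using sums sum.remove[OF fin bA, of "\<lambda>b'. x s (Some (J, b'))"] t by simp
        then have "x s t = x s pt" using zs by simp
        then show ?thesis using IH p1 o by simp
      qed
    qed
  qed
qed

theorem mainTheorem5:
  fixes H :: "'a list set" and lab :: "'a list \<Rightarrow> 'i" and owner :: "'i \<Rightarrow> player"
    and A :: "'i \<Rightarrow> 'a set" and \<xi> :: "('i \<times> 'a) option \<Rightarrow> ('i \<times> 'a) option \<Rightarrow> real"
  assumes "efg H lab owner A"
    and "\<xi> \<in> semi_T1 H lab owner A \<union> semi_T2 H lab owner A"
  shows "\<forall>(s1, s2) \<in> relevant_pairs H lab owner A. \<xi> s1 s2 = \<xi> s1 None * \<xi> None s2"
proof (intro ballI, clarify)
  fix s1 s2 assume rp: "(s1, s2) \<in> relevant_pairs H lab owner A"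
  then have s1: "s1 \<in> seqs H lab owner A T1" and s2: "s2 \<in> seqs H lab owner A T2"
    and r: "relevant H lab s1 s2" unfolding relevant_pairs_def by auto
  have V: "\<xi> \<in> vsf_polytope H lab owner A" using assms(2) unfolding semi_T1_def semi_T2_def by auto
  have nn: "\<And>s t. s \<in> seqs H lab owner A T1 \<Longrightarrow> t \<in> seqs H lab owner A T2 \<Longrightarrow> relevant H lab s t \<Longrightarrow> \<xi> s t \<ge> 0"
    using V unfolding vsf_polytope_def relevant_pairs_def by auto
  have c1: "\<And>I t. I \<in> infosets H lab owner T1 \<Longrightarrow> t \<in> seqs H lab owner A T2 \<Longrightarrow> relevant_si H lab t I
       \<Longrightarrow> (\<Sum>a\<in>A I. \<xi> (Some (I, a)) t) = \<xi> (parent_seq H lab owner I) t"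
    using V unfolding vsf_polytope_def by blast
  have c2: "\<And>J s. J \<in> infosets H lab owner T2 \<Longrightarrow> s \<in> seqs H lab owner A T1 \<Longrightarrow> relevant_si H lab s J
       \<Longrightarrow> (\<Sum>b\<in>A J. \<xi> s (Some (J, b))) = \<xi> s (parent_seq H lab owner J)"
    using V unfolding vsf_polytope_def by blast
  have one: "\<xi> None None = 1" using V unfolding vsf_polytope_def by blast
  show "\<xi> s1 s2 = \<xi> s1 None * \<xi> None s2"
  proof (cases "\<xi> \<in> semi_T1 H lab owner A")
    case True
    then have bin: "\<And>t. t \<in> seqs H lab owner A T2 \<Longrightarrow> \<xi> None t \<in> {0, 1}"
      unfolding semi_T1_def by blast
    show ?thesis
      by (rule mainlem[of H lab owner A T1 T2 \<xi>, OF assms(1) _ _ nn c1 c2 one bin s1 s2 r]) simp_all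
  next
    case False
    then have "\<xi> \<in> semi_T2 H lab owner A" using assms(2) by blast
    then have bin: "\<And>t. t \<in> seqs H lab owner A T1 \<Longrightarrow> \<xi> t None \<in> {0, 1}"
      unfolding semi_T2_def by blast
    have nn': "\<And>s t. s \<in> seqs H lab owner A T2 \<Longrightarrow> t \<in> seqs H lab owner A T1 \<Longrightarrow> relevant H lab s t \<Longrightarrow> (\<lambda>s t. \<xi> t s) s t \<ge> 0"
      using nn relevant_sym by blast
    have "(\<lambda>s t. \<xi> t s) s2 s1 = (\<lambda>s t. \<xi> t s) s2 None * (\<lambda>s t. \<xi> t s) None s1"
      by (rule mainlem[of H lab owner A T2 T1 "\<lambda>s t. \<xi> t s", OF assms(1) _ _ nn' c2 c1 one bin s2 s1])
         (simp_all add: r relevant_sym[of H lab s2 s1])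
    then show ?thesis by simp
  qed
qed

end
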